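(* Let $q\ge1$, $c>0$, $\theta\in\mathbb R$, $n\in\{1,\dots,N\}$, and $\varphi_n(t)=\theta-\lambda_n(t-t_{n-1})$ on $I_n$ with $\lambda_n=\zeta_q/\tau_n$, $\zeta_q=\frac1{4(2q+1)}$. For every $u\in\mathcal V_{h,\tau}^{p,q}$ write $u|_{Q_n}(x,t)=\sigma_n(x)L_q(t)+(\Pi_{q-1}^tu)(x,t)$, where $L_q$ is the Legendre polynomial of degree $q$ on $I_n$ normalized by $L_q(t_n)=1$. Then $$-c^2\big(\nabla u,(\mathrm{Id}-\Pi_{q-1}^t)(\varphi_n\nabla\partial_tu)\big)_{Q_n}=\frac{c^2q\,\zeta_q}{2q+1}\|\nabla\sigma_n\|_{L^2(\Omega)^d}^2\ \ge0.$$
   Context: $\Omega\subset\mathbb R^d$ bounded polytopic, $\mathcal T_h$ a simplicial mesh, $\mathcal V_h^p=\{v\in H^1_0(\Omega):v|_K\in\mathbb P^p(K)\}$; time partition $0=t_0<\dots<t_N=T$, $I_n=(t_{n-1},t_n)$, $\tau_n=|I_n|$, $Q_n=\Omega\times I_n$; $\mathcal V_{h,\tau}^{p,q}=\{v\in C^0([0,T];H^1_0(\Omega)):v|_{Q_n}\in\mathbb P^q(I_n;\mathcal V_h^p)\ \forall n\}$. $\Pi_{q-1}^t$ is the $L^2$-orthogonal projection in time onto polynomials of degree at most $q-1$ on each $I_n$, applied pointwise in space (and componentwise to vector fields); $(\cdot,\cdot)_{Q_n}$ is the $L^2(Q_n)$ inner product. *)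

theory Defs
  imports "HOL-Analysis.Analysis" "HOL-Computational_Algebra.Polynomial"
begin

definition mpoly_le :: "nat \<Rightarrow> (real^'d \<Rightarrow> real) \<Rightarrow> bool" where
  "mpoly_le p P \<longleftrightarrow> (\<exists>c :: ('d \<Rightarrow> nat) \<Rightarrow> real.
      \<forall>x. P x = (\<Sum>\<alpha>\<in>{\<alpha>. sum \<alpha> UNIV \<le> p}. c \<alpha> * (\<Prod>i\<in>UNIV. (x$i) ^ (\<alpha> i))))"

definition is_simplex :: "(real^'d) set \<Rightarrow> (real^'d) set \<Rightarrow> bool" where
  "is_simplex S K \<longleftrightarrow> finite S \<and> card S = CARD('d) + 1 \<and> \<not> affine_dependent S \<and> K = convex hull S"

definition simplicial_mesh :: "(real^'d) set \<Rightarrow> (real^'d) set set \<Rightarrow> bool" where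
  "simplicial_mesh \<Omega> Th \<longleftrightarrow> finite Th \<and> (\<forall>K\<in>Th. \<exists>S. is_simplex S K) \<and> \<Union>Th = closure \<Omega> \<and>
     (\<forall>K\<in>Th. \<forall>K'\<in>Th. K \<noteq> K' \<longrightarrow>
        (\<exists>S S'. is_simplex S K \<and> is_simplex S' K' \<and> K \<inter> K' = convex hull (S \<inter> S')))"

text \<open>V_h^p: continuous piecewise polynomials of degree p vanishing on the boundary
  (continuous representatives of the H^1_0 functions that are piecewise P^p).\<close>
definition Vh :: "(real^'d) set \<Rightarrow> (real^'d) set set \<Rightarrow> nat \<Rightarrow> (real^'d \<Rightarrow> real) set" where
  "Vh \<Omega> Th p = {v. (\<forall>K\<in>Th. \<exists>P. mpoly_le p P \<and> (\<forall>x\<in>K. v x = P x)) \<and> (\<forall>x\<in>frontier \<Omega>. v x = 0)}"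

definition time_partition :: "(nat \<Rightarrow> real) \<Rightarrow> nat \<Rightarrow> real \<Rightarrow> bool" where
  "time_partition tt N T \<longleftrightarrow> tt 0 = 0 \<and> tt N = T \<and> (\<forall>n\<in>{1..N}. tt (n - 1) < tt n)"

text \<open>V_{h,tau}^{p,q}: on each closed slab [t_{n-1},t_n] a polynomial of degree q in time with
  coefficients in V_h^p; using closed intervals encodes continuity in time.\<close>
definition Vht :: "(real^'d) set \<Rightarrow> (real^'d) set set \<Rightarrow> nat \<Rightarrow> (nat \<Rightarrow> real) \<Rightarrow> nat \<Rightarrow> nat
    \<Rightarrow> (real^'d \<Rightarrow> real \<Rightarrow> real) set" where
  "Vht \<Omega> Th p tt N q = {u. \<forall>n\<in>{1..N}. \<exists>v. (\<forall>j\<le>q. v j \<in> Vh \<Omega> Th p) \<and>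
      (\<forall>x. \<forall>s\<in>{tt (n - 1)..tt n}. u x s = (\<Sum>j\<le>q. v j x * s ^ j))}"

definition tproj :: "real \<Rightarrow> real \<Rightarrow> nat \<Rightarrow> (real \<Rightarrow> real) \<Rightarrow> real \<Rightarrow> real" where
  "tproj a b k g = poly (THE P. degree P \<le> k \<and>
      (\<forall>r :: real poly. degree r \<le> k \<longrightarrow> integral {a..b} (\<lambda>s. (g s - poly P s) * poly r s) = 0))"

definition tprojv :: "real \<Rightarrow> real \<Rightarrow> nat \<Rightarrow> (real \<Rightarrow> real^'d) \<Rightarrow> real \<Rightarrow> real^'d" where
  "tprojv a b k G s = (\<chi> i. tproj a b k (\<lambda>r. G r $ i) s)"

text \<open>Legendre polynomial of degree q transported to [a,b], normalized by value 1 at b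
  (shifted Legendre polynomial in (t-a)/(b-a)).\<close>
definition legendre_on :: "real \<Rightarrow> real \<Rightarrow> nat \<Rightarrow> real \<Rightarrow> real" where
  "legendre_on a b q t = (\<Sum>k\<le>q. (-1) ^ (q + k) * real (q choose k) * real ((q + k) choose k)
                                  * ((t - a) / (b - a)) ^ k)"

definition grad :: "(real^'d \<Rightarrow> real) \<Rightarrow> real^'d \<Rightarrow> real^'d" where
  "grad f x = (\<chi> i. frechet_derivative f (at x) (axis i 1))"

end

theory Submission
  imports Defs
begin

definition cL :: "nat \<Rightarrow> nat \<Rightarrow> real" where
  "cL q k = (-1)^(q+k) * real (q choose k) * real ((q+k) choose k)"

lemma prodA: "(\<Prod>j<k. real j - real k) = (-1)^k * fact k"
proof -
  have "(\<Prod>j<k. real j - real k) = (\<Prod>j<k. (-1) * real (k - j))"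
    by (rule prod.cong) auto
  also have "\<dots> = (-1)^k * (\<Prod>j<k. real (k - j))"
    unfolding prod.distrib prod_constant card_lessThan by simp
  also have "(\<Prod>j<k. real (k - j)) = fact k"
    by (simp add: fact_prod_rev lessThan_atLeast0)
  finally show ?thesis .
qed

lemma prodB: "(\<Prod>j\<in>{k<..k+d}. real j - real k) = fact d"
proof (induction d)
  case 0 then show ?case by simp
next
  case (Suc d)
  have "{k<..k+Suc d} = insert (k + Suc d) {k<..k+d}" by auto
  then show ?case using Suc by (simp add: algebra_simps)
qed

lemma prodB': "k \<le> q \<Longrightarrow> (\<Prod>j\<in>{k<..q}. real j - real k) = fact (q - k)"
  using prodB[of k "q-k"] by simp

lemma prodC: "(\<Prod>j\<in>{..q}-{k}. real j - real k) = (-1)^k * fact k * fact (q - k)"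
  if "k \<le> q"
proof -
  have e: "{..q}-{k} = {..<k} \<union> {k<..q}" using that by auto
  have "(\<Prod>j\<in>{..q}-{k}. real j - real k) = (\<Prod>j<k. real j - real k) * (\<Prod>j\<in>{k<..q}. real j - real k)"
    unfolding e by (rule prod.union_disjoint) auto
  then show ?thesis using prodA prodB' that by simp
qed

lemma prodN: "(\<Prod>i<q. - real k - 1 - real i) = (-1)^q * fact (k+q) / fact k"
proof -
  have "(\<Prod>i<q. - real k - 1 - real i) = (\<Prod>i<q. (-1) * (real k + 1 + real i))"
    by (rule prod.cong) auto
  also have "\<dots> = (-1)^q * pochhammer (real k + 1) q"
    unfolding prod.distrib prod_constant card_lessThan pochhammer_prod lessThan_atLeast0 by simp
  also have "fact (k+q) = fact k * pochhammer (real k + 1) q"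
    using pochhammer_product[of k "k+q" "1::real"] by (simp add: pochhammer_fact add.commute)
  then have "pochhammer (real k + 1) q = fact (k+q) / fact k"
    by (simp add: field_simps)
  finally show ?thesis by simp
qed

lemma cL_root: "k \<le> q \<Longrightarrow> cL q k * (\<Prod>j\<in>{..q}-{k}. real j - real k) = (\<Prod>i<q. - real k - 1 - real i)"
proof -
  assume k: "k \<le> q"
  have b1: "real (q choose k) = fact q / (fact k * fact (q - k))" using k by (rule binomial_fact)
  have b2: "real ((q+k) choose k) = fact (q+k) / (fact k * fact q)" using binomial_fact[of k "q+k"] by simp
  have s: "(-1::real)^(q+k) * (-1)^k = (-1)^q"
    by (simp add: power_add mult.assoc flip: power_add) (simp add: power_add flip: mult_2 power_mult)
  show ?thesis
    unfolding prodC[OF k] prodN cL_def b1 b2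
    using s by (simp add: field_simps add.commute)
qed

lemma interp:
  fixes z :: real
  shows "(\<Sum>k\<le>q. cL q k * (\<Prod>j\<in>{..q}-{k}. z + real j + 1)) = (\<Prod>i<q. z - real i)"
proof -
  define Pk where "Pk k = (\<Prod>j\<in>{..q}-{k}. [:real j + 1, 1:])" for k
  define N where "N = (\<Prod>i<q. [:- real i, 1:])"
  define R where "R = (\<Sum>k\<le>q. smult (cL q k) (Pk k)) - N"
  have pR: "poly R z = (\<Sum>k\<le>q. cL q k * (\<Prod>j\<in>{..q}-{k}. z + real j + 1)) - (\<Prod>i<q. z - real i)" for z
    unfolding R_def Pk_def N_def by (simp add: poly_sum poly_prod algebra_simps)
  have dPk: "degree (Pk k) \<le> q" if "k \<le> q" for k
  proof -
    have "degree (Pk k) \<le> sum (degree \<circ> (\<lambda>j. [:real j + 1, 1:])) ({..q}-{k})"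
      unfolding Pk_def by (rule degree_prod_sum_le) auto
    also have "\<dots> = card ({..q}-{k})" by simp
    also have "\<dots> = q" using that by simp
    finally show ?thesis .
  qed
  have dN: "degree N \<le> q"
  proof -
    have "degree N \<le> sum (degree \<circ> (\<lambda>i. [:- real i, 1:])) {..<q}"
      unfolding N_def by (rule degree_prod_sum_le) auto
    also have "\<dots> = q" by simp
    finally show ?thesis .
  qed
  have dR: "degree R \<le> q"
    unfolding R_def
    by (intro order.trans[OF degree_diff_le_max] max.boundedI dN degree_sum_le order.trans[OF degree_smult_le] dPk) auto
  have roots: "poly R (- real k - 1) = 0" if k: "k \<le> q" for k
  proof -
    have "(\<Sum>k'\<le>q. cL q k' * (\<Prod>j\<in>{..q}-{k'}. (- real k - 1) + real j + 1))
        = (\<Sum>k'\<in>{k}. cL q k' * (\<Prod>j\<in>{..q}-{k'}. (- real k - 1) + real j + 1))"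
    proof (rule sum.mono_neutral_right)
      show "\<forall>i\<in>{..q} - {k}. cL q i * (\<Prod>j\<in>{..q} - {i}. - real k - 1 + real j + 1) = 0"
      proof
        fix i assume i: "i \<in> {..q} - {k}"
        have "(\<Prod>j\<in>{..q} - {i}. - real k - 1 + real j + 1) = 0"
          by (rule prod_zero) (use i k in \<open>auto intro!: bexI[where x=k]\<close>)
        then show "cL q i * (\<Prod>j\<in>{..q} - {i}. - real k - 1 + real j + 1) = 0" by simp
      qed
    qed (use k in auto)
    also have "\<dots> = cL q k * (\<Prod>j\<in>{..q}-{k}. real j - real k)" by simp
    also have "\<dots> = (\<Prod>i<q. - real k - 1 - real i)" using cL_root[OF k] .
    finally show ?thesis unfolding pR by simp
  qed
  have "R = 0"
  proof (rule ccontr)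
    assume "R \<noteq> 0"
    have "(\<lambda>k. - real k - 1) ` {..q} \<subseteq> {x. poly R x = 0}" using roots by auto
    then have "card ((\<lambda>k. - real k - 1) ` {..q}) \<le> card {x. poly R x = 0}"
      by (intro card_mono poly_roots_finite \<open>R \<noteq> 0\<close>)
    also have "\<dots> \<le> degree R" by (rule card_poly_roots_bound[OF \<open>R \<noteq> 0\<close>])
    also have "card ((\<lambda>k. - real k - 1) ` {..q}) = Suc q"
      by (subst card_image) (auto simp: inj_on_def)
    finally show False using dR by simp
  qed
  then show ?thesis using pR[of z] by simp
qed

lemma Asum: "m \<le> q \<Longrightarrow> (\<Sum>k\<le>q. cL q k / (real k + real m + 1)) = (if m < q then 0 else (fact q)^2 / fact (2*q+1))"
proof -
  assume m: "m \<le> q"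
  define D where "D = (\<Prod>j\<le>q. real m + real j + 1)"
  have D0: "D > 0" unfolding D_def by (intro prod_pos) auto
  have Dk: "D = (real m + real k + 1) * (\<Prod>j\<in>{..q}-{k}. real m + real j + 1)" if "k \<le> q" for k
    unfolding D_def using that by (subst prod.remove[of _ k]) auto
  have "(\<Sum>k\<le>q. cL q k / (real k + real m + 1)) = (\<Sum>k\<le>q. cL q k * (\<Prod>j\<in>{..q}-{k}. real m + real j + 1)) / D"
    unfolding sum_divide_distrib
  proof (rule sum.cong[OF refl])
    fix k assume "k \<in> {..q}"
    then have "k \<le> q" by simp
    from Dk[OF this] D0 show "cL q k / (real k + real m + 1) = cL q k * (\<Prod>j\<in>{..q}-{k}. real m + real j + 1) / D"
      by (simp add: field_simps)
  qed
  also have "\<dots> = (\<Prod>i<q. real m - real i) / D" by (simp add: interp)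
  finally have eq: "(\<Sum>k\<le>q. cL q k / (real k + real m + 1)) = (\<Prod>i<q. real m - real i) / D" .
  show ?thesis
  proof (cases "m < q")
    case True
    have "(\<Prod>i<q. real m - real i) = 0" by (rule prod_zero) (use True in \<open>auto intro!: bexI[where x=m]\<close>)
    then show ?thesis using eq True by simp
  next
    case False
    then have mq: "m = q" using m by simp
    have n: "(\<Prod>i<q. real q - real i) = fact q"
      by (simp add: fact_prod_rev lessThan_atLeast0 of_nat_diff)
    have "D = pochhammer (real q + 1) (Suc q)"
      unfolding D_def pochhammer_prod mq by (simp add: atLeast0LessThan lessThan_Suc_atMost algebra_simps)
    moreover have "fact (2*q+1) = fact q * pochhammer (real q + 1) (Suc q)"
      using pochhammer_product[of q "2*q+1" "1::real"] by (simp add: pochhammer_fact add.commute)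
    ultimately have "D = fact (2*q+1) / fact q" by (simp add: field_simps)
    then show ?thesis using eq n mq by (simp add: power2_eq_square)
  qed
qed

lemma int_shift_pow: "a \<le> b \<Longrightarrow> ((\<lambda>s. (s - a)^n) has_integral (b - a)^(n+1) / real (n+1)) {a..b}"
proof -
  assume ab: "a \<le> b"
  have d: "((\<lambda>s. (s - a)^(n+1) / real (n+1)) has_vector_derivative (s - a)^n) (at s within {a..b})" for s
    unfolding has_real_derivative_iff_has_vector_derivative[symmetric]
    by (rule derivative_eq_intros refl | simp)+
  from fundamental_theorem_of_calculus[OF ab d] show ?thesis by simp
qed

lemma legendre_expand: "legendre_on a b q s = (\<Sum>k\<le>q. (cL q k / (b - a)^k) * (s - a)^k)"
  unfolding legendre_on_def cL_def by (simp add: power_divide)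

lemma legendre_mono_int:
  assumes ab: "a < b"
  shows "((\<lambda>s. legendre_on a b q s * (s - a)^m) has_integral ((b - a)^(m+1) * (\<Sum>k\<le>q. cL q k / (real k + real m + 1)))) {a..b}"
proof -
  have e: "(\<lambda>s. legendre_on a b q s * (s - a)^m) = (\<lambda>s. \<Sum>k\<le>q. (cL q k / (b - a)^k) * (s - a)^(k+m))"
    by (simp add: legendre_expand sum_distrib_right power_add mult.assoc)
  have "((\<lambda>s. \<Sum>k\<le>q. (cL q k / (b - a)^k) * (s - a)^(k+m)) has_integral
         (\<Sum>k\<le>q. (cL q k / (b - a)^k) * ((b - a)^(k+m+1) / real (k+m+1)))) {a..b}"
    using ab by (intro has_integral_sum has_integral_mult_right int_shift_pow) auto
  also have "(\<Sum>k\<le>q. (cL q k / (b - a)^k) * ((b - a)^(k+m+1) / real (k+m+1)))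
      = (b - a)^(m+1) * (\<Sum>k\<le>q. cL q k / (real k + real m + 1))"
    unfolding sum_distrib_left
  proof (rule sum.cong[OF refl])
    fix k
    have fs: "C / c ^ k * (c ^ k * c^(m + 1) / (real k + real m + 1)) =
         c ^ (m + 1) * (C / (real k + real m + 1))" if "c > 0" for c C :: real
      using that by (simp add: field_simps)
    have "(b - a)^(k+m+1) = (b-a)^k * (b-a)^(m+1)" by (simp add: power_add)
    moreover have "real (k + m + 1) = real k + real m + 1" by simp
    ultimately show "cL q k / (b - a) ^ k * ((b - a) ^ (k + m + 1) / real (k + m + 1)) =
         (b - a) ^ (m + 1) * (cL q k / (real k + real m + 1))"
      using fs[of "b - a" "cL q k"] ab by (simp only:)
  qed
  finally show ?thesis unfolding e .
qed

lemma poly_sum_upto: fixes p :: "real poly" assumes "degree p \<le> n" shows "poly p x = (\<Sum>i\<le>n. coeff p i * x^i)"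
  unfolding poly_altdef
  by (rule sum.mono_neutral_left) (use assms in \<open>auto simp: coeff_eq_0\<close>)

lemma coeff_shift_q: fixes r :: "real poly" shows "degree r \<le> q \<Longrightarrow> coeff (r \<circ>\<^sub>p [:a, 1:]) q = coeff r (q::nat)"
proof -
  assume d: "degree r \<le> q"
  have dd: "degree (r \<circ>\<^sub>p [:a, 1:]) = degree r" by (simp add: degree_pcompose)
  show ?thesis
  proof (cases "degree r = q")
    case True
    have "lead_coeff (r \<circ>\<^sub>p [:a, 1:]) = lead_coeff r" by (subst lead_coeff_comp) auto
    then show ?thesis using True dd by simp
  next
    case False
    then show ?thesis using d dd by (simp add: coeff_eq_0)
  qed
qed

definition K0 :: "real \<Rightarrow> real \<Rightarrow> nat \<Rightarrow> real" where
  "K0 a b q = (b - a)^(q+1) * (fact q)^2 / fact (2*q+1)"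

lemma legendre_poly_int:
  assumes ab: "a < b" and d: "degree r \<le> q"
  shows "((\<lambda>s. legendre_on a b q s * poly r s) has_integral (coeff r q * K0 a b q)) {a..b}"
proof -
  define r' where "r' = r \<circ>\<^sub>p [:a, 1:]"
  have dr': "degree r' \<le> q" unfolding r'_def using d by (simp add: degree_pcompose)
  have pr: "poly r s = (\<Sum>m\<le>q. coeff r' m * (s - a)^m)" for s
  proof -
    have "poly r s = poly r' (s - a)" unfolding r'_def by (simp add: poly_pcompose)
    then show ?thesis using poly_sum_upto[OF dr'] by simp
  qed
  have e: "(\<lambda>s. legendre_on a b q s * poly r s) = (\<lambda>s. \<Sum>m\<le>q. coeff r' m * (legendre_on a b q s * (s - a)^m))"
    by (simp add: pr sum_distrib_left mult.commute mult.left_commute)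
  have "((\<lambda>s. \<Sum>m\<le>q. coeff r' m * (legendre_on a b q s * (s - a)^m)) has_integral
        (\<Sum>m\<le>q. coeff r' m * ((b - a)^(m+1) * (\<Sum>k\<le>q. cL q k / (real k + real m + 1))))) {a..b}"
    using ab by (intro has_integral_sum has_integral_mult_right legendre_mono_int) auto
  also have "(\<Sum>m\<le>q. coeff r' m * ((b - a)^(m+1) * (\<Sum>k\<le>q. cL q k / (real k + real m + 1))))
     = (\<Sum>m\<in>{q}. coeff r' m * ((b - a)^(m+1) * (\<Sum>k\<le>q. cL q k / (real k + real m + 1))))"
    by (rule sum.mono_neutral_right) (auto simp: Asum)
  also have "\<dots> = coeff r q * K0 a b q"
    using coeff_shift_q[OF d] by (simp add: Asum K0_def r'_def)
  finally show ?thesis unfolding e .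
qed

definition Lp :: "real \<Rightarrow> real \<Rightarrow> nat \<Rightarrow> real poly" where
  "Lp a b q = (\<Sum>k\<le>q. smult (cL q k / (b - a)^k) ([:- a, 1:]^k))"

definition ell :: "real \<Rightarrow> real \<Rightarrow> nat \<Rightarrow> real" where
  "ell a b q = real ((2*q) choose q) / (b - a)^q"

lemma poly_Lp: "poly (Lp a b q) s = legendre_on a b q s"
  unfolding Lp_def legendre_expand by (simp add: poly_sum poly_power)

lemma degree_Lp: "degree (Lp a b q) \<le> q"
  unfolding Lp_def
  by (intro degree_sum_le order.trans[OF degree_smult_le] order.trans[OF degree_power_le]) auto

lemma coeff_Lp: "coeff (Lp a b q) q = ell a b q"
proof -
  have "coeff (Lp a b q) q = (\<Sum>k\<le>q. cL q k / (b - a)^k * coeff ([:- a, 1:]^k) q)"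
    unfolding Lp_def by (simp add: coeff_sum)
  also have "\<dots> = (\<Sum>k\<in>{q}. cL q k / (b - a)^k * coeff ([:- a, 1:]^k) q)"
  proof (rule sum.mono_neutral_right)
    show "\<forall>i\<in>{..q} - {q}. cL q i / (b - a) ^ i * coeff ([:- a, 1:] ^ i) q = 0"
    proof
      fix i assume "i \<in> {..q} - {q}"
      then have "degree ([:- a, 1:] ^ i) < q"
        using degree_power_le[of "[:- a, 1:]" i] by auto
      then show "cL q i / (b - a) ^ i * coeff ([:- a, 1:] ^ i) q = 0" by (simp add: coeff_eq_0)
    qed
  qed auto
  also have "\<dots> = ell a b q"
    by (simp add: coeff_linear_power cL_def ell_def flip: mult_2)
  finally show ?thesis .
qed

lemma ell_pos: "a < b \<Longrightarrow> ell a b q > 0"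
  unfolding ell_def by (auto intro!: divide_pos_pos)

lemma ell_K0: "a < b \<Longrightarrow> ell a b q * K0 a b q = (b - a) / (2 * real q + 1)"
proof -
  assume ab: "a < b"
  have c: "real ((2*q) choose q) = fact (2*q) / (fact q * fact q)"
    using binomial_fact[of q "2*q"] by (simp add: mult_2)
  have f: "fact (2*q+1) = (2 * real q + 1) * (fact (2*q) :: real)"
    by (simp add: algebra_simps)
  have gen: "F / (g * g) / cc ^ q * (cc ^ q * cc * (g^2) / ((2 * real q + 1) * F)) = cc / (2 * real q + 1)"
    if "cc > 0" "F > 0" "g > 0" for cc F g :: real
  proof -
    have "F / (g * g) / cc ^ q * (cc ^ q * cc * (g^2) / ((2 * real q + 1) * F)) = (F / F) * ((g*g)/(g*g)) * (cc^q/cc^q) * (cc / (2 * real q + 1))"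
      by (simp add: power2_eq_square)
    also have "\<dots> = cc / (2 * real q + 1)" using that by simp
    finally show ?thesis .
  qed
  show ?thesis
    unfolding ell_def K0_def c f power_add power_one_right
    by (rule gen) (use ab in auto)
qed

lemma degree_le_pred:
  fixes Q :: "real poly"
  assumes "degree Q \<le> q" "coeff Q q = 0" "1 \<le> q"
  shows "degree Q \<le> q - 1"
proof (rule ccontr)
  assume "\<not> degree Q \<le> q - 1"
  then have "degree Q = q" using assms by simp
  then have "Q \<noteq> 0" using assms by auto
  then have "lead_coeff Q \<noteq> 0" by simp
  then show False using \<open>degree Q = q\<close> assms by simp
qed

lemma poly_zero_on_interval:
  fixes R :: "real poly"
  assumes "a < b" "\<And>s. s \<in> {a..b} \<Longrightarrow> poly R s = 0"
  shows "R = 0"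
proof (rule ccontr)
  assume "R \<noteq> 0"
  then have "finite {x. poly R x = 0}" by (rule poly_roots_finite)
  moreover have "{a..b} \<subseteq> {x. poly R x = 0}" using assms by auto
  ultimately have "finite {a..b}" by (rule finite_subset[rotated])
  then show False using infinite_Icc[OF assms(1)] by simp
qed

lemma tproj_char:
  assumes ab: "a < b" and q: "1 \<le> q" and dP: "degree P \<le> q"
    and g: "\<And>r. r \<in> {a<..<b} \<Longrightarrow> g r = poly P r"
  shows "tproj a b (q - 1) g = poly (P - smult (coeff P q / ell a b q) (Lp a b q))"
proof -
  define Q where "Q = P - smult (coeff P q / ell a b q) (Lp a b q)"
  have ell0: "ell a b q \<noteq> 0" using ell_pos[OF ab, of q] by linarith
  have dQ: "degree Q \<le> q - 1"
  proof (rule degree_le_pred[OF _ _ q])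
    show "degree Q \<le> q" unfolding Q_def
      by (intro order.trans[OF degree_diff_le_max] max.boundedI dP order.trans[OF degree_smult_le] degree_Lp)
    show "coeff Q q = 0" unfolding Q_def using ell0 by (simp add: coeff_Lp)
  qed
  have neg: "negligible {a, b}" by simp
  have gQ: "((\<lambda>s. (g s - poly Q s) * poly r s) has_integral 0) {a..b}" if dr: "degree r \<le> q - 1" for r
  proof (rule has_integral_spike[OF neg])
    show "((\<lambda>s. (coeff P q / ell a b q) * (legendre_on a b q s * poly r s)) has_integral 0) {a..b}"
    proof -
      have c0: "coeff r q = 0" using dr q by (intro coeff_eq_0) auto
      have dr': "degree r \<le> q" using dr by simp
      have "((\<lambda>s. (coeff P q / ell a b q) * (legendre_on a b q s * poly r s)) has_integral ((coeff P q / ell a b q) * (coeff r q * K0 a b q))) {a..b}"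
        by (rule has_integral_mult_right[OF legendre_poly_int[OF ab dr']])
      then show ?thesis using c0 by simp
    qed
    fix s assume "s \<in> {a..b} - {a, b}"
    then have "s \<in> {a<..<b}" by auto
    then show "(g s - poly Q s) * poly r s = (coeff P q / ell a b q) * (legendre_on a b q s * poly r s)"
      using g[of s] unfolding Q_def by (simp add: poly_Lp algebra_simps)
  qed
  have "(THE P. degree P \<le> q - 1 \<and>
      (\<forall>r :: real poly. degree r \<le> q - 1 \<longrightarrow> integral {a..b} (\<lambda>s. (g s - poly P s) * poly r s) = 0)) = Q"
  proof (rule the_equality)
    show "degree Q \<le> q - 1 \<and> (\<forall>r :: real poly. degree r \<le> q - 1 \<longrightarrow> integral {a..b} (\<lambda>s. (g s - poly Q s) * poly r s) = 0)"
    proof (intro conjI allI impI dQ)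
      fix r :: "real poly" assume "degree r \<le> q - 1"
      then show "integral {a..b} (\<lambda>s. (g s - poly Q s) * poly r s) = 0" by (rule integral_unique[OF gQ])
    qed
  next
    fix P' assume H: "degree P' \<le> q - 1 \<and> (\<forall>r :: real poly. degree r \<le> q - 1 \<longrightarrow> integral {a..b} (\<lambda>s. (g s - poly P' s) * poly r s) = 0)"
    define R where "R = Q - P'"
    have dR: "degree R \<le> q - 1" unfolding R_def using H dQ
      by (intro order.trans[OF degree_diff_le_max] max.boundedI) auto
    have i1: "((\<lambda>s. (g s - poly Q s) * poly R s) has_integral 0) {a..b}" using gQ[OF dR] .
    have i2: "((\<lambda>s. poly R s * poly R s) has_integral integral {a..b} (\<lambda>s. poly R s * poly R s)) {a..b}"
      by (intro integrable_integral integrable_continuous_interval continuous_intros)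
    have hi: "((\<lambda>s. (g s - poly P' s) * poly R s) has_integral (0 + integral {a..b} (\<lambda>s. poly R s * poly R s))) {a..b}"
    proof -
      have "(\<lambda>s. (g s - poly P' s) * poly R s) = (\<lambda>s. (g s - poly Q s) * poly R s + poly R s * poly R s)"
        unfolding R_def by (auto simp: algebra_simps)
      then show ?thesis using has_integral_add[OF i1 i2] by simp
    qed
    have "integral {a..b} (\<lambda>s. (g s - poly P' s) * poly R s) = 0" using H dR by blast
    moreover have "integral {a..b} (\<lambda>s. (g s - poly P' s) * poly R s) = 0 + integral {a..b} (\<lambda>s. poly R s * poly R s)"
      by (rule integral_unique[OF hi])
    ultimately have "integral {a..b} (\<lambda>s. poly R s * poly R s) = 0" by simp
    then have i3: "((\<lambda>s. poly R s * poly R s) has_integral 0) (cbox a b)" using i2 by simp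
    have "poly R s * poly R s = 0" if "s \<in> {a..b}" for s
    proof (rule has_integral_0_cbox_imp_0[OF _ _ i3])
      show "continuous_on (cbox a b) (\<lambda>s. poly R s * poly R s)" by (intro continuous_intros)
      show "box a b \<noteq> {}" using ab by simp
      show "s \<in> cbox a b" using that by simp
    qed simp
    then have "R = 0" using poly_zero_on_interval[OF ab] by simp
    then show "P' = Q" unfolding R_def by simp
  qed
  then show ?thesis unfolding tproj_def Q_def by simp
qed

definition mono_grad :: "('d::finite \<Rightarrow> nat) \<Rightarrow> real^'d \<Rightarrow> real^'d" where
  "mono_grad \<alpha> x = (\<chi> i. of_nat (\<alpha> i) * (x$i)^(\<alpha> i - 1) * (\<Prod>j\<in>UNIV-{i}. (x$j)^(\<alpha> j)))"

lemma mono_has_derivative: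
  fixes \<alpha> :: "'d::finite \<Rightarrow> nat"
  shows "((\<lambda>x::real^'d. \<Prod>i\<in>UNIV. (x$i)^(\<alpha> i)) has_derivative (\<lambda>h. mono_grad \<alpha> x \<bullet> h)) (at x)"
proof -
  have d: "((\<lambda>x::real^'d. (x$i)^(\<alpha> i)) has_derivative (\<lambda>h. of_nat (\<alpha> i) * (x$i)^(\<alpha> i - 1) * h$i)) (at x)" for i
  proof -
    have l: "((\<lambda>x::real^'d. x$i) has_derivative (\<lambda>h. h$i)) (at x)"
      by (rule bounded_linear_imp_has_derivative) (rule bounded_linear_vec_nth)
    show ?thesis
      using has_derivative_power[OF l, of "\<alpha> i"] by (simp add: mult_ac)
  qed
  have "((\<lambda>x::real^'d. \<Prod>i\<in>UNIV. (x$i)^(\<alpha> i)) has_derivative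
     (\<lambda>h. \<Sum>i\<in>UNIV. of_nat (\<alpha> i) * (x$i)^(\<alpha> i - 1) * h$i * (\<Prod>j\<in>UNIV - {i}. (x$j)^(\<alpha> j)))) (at x)"
    by (rule has_derivative_prod) (rule d)
  moreover have "(\<lambda>h. \<Sum>i\<in>UNIV. of_nat (\<alpha> i) * (x$i)^(\<alpha> i - 1) * h$i * (\<Prod>j\<in>UNIV - {i}. (x$j)^(\<alpha> j)))
      = (\<lambda>h. mono_grad \<alpha> x \<bullet> h)"
    by (rule ext) (simp add: mono_grad_def inner_vec_def mult_ac)
  ultimately show ?thesis by simp
qed

lemma mono_grad_cont: "continuous_on UNIV (mono_grad \<alpha>)"
  unfolding mono_grad_def
  by (intro continuous_on_vec_lambda continuous_intros)

lemma mpoly_deriv: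
  fixes P :: "real^'d::finite \<Rightarrow> real"
  assumes "mpoly_le p P"
  shows "\<exists>G. continuous_on UNIV G \<and> (\<forall>x. (P has_derivative (\<lambda>h. G x \<bullet> h)) (at x))"
proof -
  obtain c :: "('d \<Rightarrow> nat) \<Rightarrow> real" where
    c: "\<forall>x. P x = (\<Sum>\<alpha>\<in>{\<alpha>. sum \<alpha> UNIV \<le> p}. c \<alpha> * (\<Prod>i\<in>UNIV. (x$i) ^ (\<alpha> i)))"
    using assms unfolding mpoly_le_def by blast
  define A where "A = {\<alpha>::'d\<Rightarrow>nat. sum \<alpha> UNIV \<le> p}"
  have Pe: "P = (\<lambda>x. \<Sum>\<alpha>\<in>A. c \<alpha> * (\<Prod>i\<in>UNIV. (x$i) ^ (\<alpha> i)))"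
    using c unfolding A_def by auto
  define G where "G x = (\<Sum>\<alpha>\<in>A. c \<alpha> *\<^sub>R mono_grad \<alpha> x)" for x
  have "continuous_on UNIV G" unfolding G_def
    by (intro continuous_intros mono_grad_cont)
  moreover have "(P has_derivative (\<lambda>h. G x \<bullet> h)) (at x)" for x
  proof -
    have "((\<lambda>x. \<Sum>\<alpha>\<in>A. c \<alpha> * (\<Prod>i\<in>UNIV. (x$i) ^ (\<alpha> i))) has_derivative
        (\<lambda>h. \<Sum>\<alpha>\<in>A. c \<alpha> * (mono_grad \<alpha> x \<bullet> h))) (at x)"
      by (intro has_derivative_sum has_derivative_mult_right mono_has_derivative)
    moreover have "(\<lambda>h. \<Sum>\<alpha>\<in>A. c \<alpha> * (mono_grad \<alpha> x \<bullet> h)) = (\<lambda>h. G x \<bullet> h)"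
      unfolding G_def by (simp add: inner_sum_left)
    ultimately show ?thesis unfolding Pe by simp
  qed
  ultimately show ?thesis by blast
qed

lemma grad_local:
  fixes f g :: "real^'d::finite \<Rightarrow> real"
  assumes "open U" "x \<in> U" "\<And>y. y \<in> U \<Longrightarrow> f y = g y" "(g has_derivative (\<lambda>h. D \<bullet> h)) (at x)"
  shows "grad f x = D"
proof -
  have "(f has_derivative (\<lambda>h. D \<bullet> h)) (at x)"
    by (rule has_derivative_transform_within_open[OF assms(4) assms(1,2)]) (simp add: assms(3))
  then have "frechet_derivative f (at x) = (\<lambda>h. D \<bullet> h)" by (simp add: frechet_derivative_at[symmetric])
  then show ?thesis unfolding grad_def by (simp add: vec_eq_iff inner_axis)
qed

lemma prod_has_integral:
  fixes \<alpha> :: "'a::euclidean_space \<Rightarrow> real" and \<beta> :: "real \<Rightarrow> real"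
  assumes A: "A \<in> sets lborel" and ia: "set_integrable lborel A \<alpha>"
    and ab: "a \<le> b" and cb: "continuous_on {a..b} \<beta>"
  shows "((\<lambda>(x,s). \<alpha> x * \<beta> s) has_integral (integral A \<alpha> * integral {a..b} \<beta>)) (A \<times> {a<..<b})"
proof -
  define B where "B = {a<..<b}"
  have ib0: "set_integrable lborel {a..b} \<beta>" by (rule borel_integrable_atLeastAtMost'[OF cb])
  have ib: "set_integrable lborel B \<beta>" unfolding B_def
    by (rule set_integrable_subset[OF ib0]) auto
  define F where "F x = indicator A x * \<alpha> x" for x
  define G where "G s = indicator B s * \<beta> s" for s
  have iF: "integrable lborel F" using ia unfolding set_integrable_def F_def by simp
  have iG: "integrable lborel G" using ib unfolding set_integrable_def G_def by simp
  have mF[measurable]: "F \<in> borel_measurable lborel" using iF by auto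
  have mG[measurable]: "G \<in> borel_measurable lborel" using iG by auto
  have mP: "(\<lambda>(x, s). F x * G s) \<in> borel_measurable (lborel \<Otimes>\<^sub>M lborel)"
    by measurable
  have iP: "integrable (lborel \<Otimes>\<^sub>M lborel) (\<lambda>(x, s). F x * G s)"
  proof (rule lborel_pair.Fubini_integrable[OF mP])
    have "(\<lambda>x. \<integral>y. norm (case (x, y) of (x, s) \<Rightarrow> F x * G s) \<partial>lborel) = (\<lambda>x. norm (F x) * (\<integral>y. norm (G y) \<partial>lborel))"
      by (simp add: abs_mult)
    moreover have "integrable lborel (\<lambda>x. norm (F x) * (\<integral>y. norm (G y) \<partial>lborel))"
      by (intro integrable_mult_left integrable_norm iF)
    ultimately show "integrable lborel (\<lambda>x. \<integral>y. norm (case (x, y) of (x, s) \<Rightarrow> F x * G s) \<partial>lborel)" by simp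
    show "AE x in lborel. integrable lborel (\<lambda>y. case (x, y) of (x, s) \<Rightarrow> F x * G s)"
      using iG by (simp add: integrable_mult_right)
  qed
  have val: "integral\<^sup>L (lborel \<Otimes>\<^sub>M lborel) (\<lambda>(x, s). F x * G s) = integral\<^sup>L lborel F * integral\<^sup>L lborel G"
  proof -
    have "integral\<^sup>L (lborel \<Otimes>\<^sub>M lborel) (\<lambda>(x, s). F x * G s) = (\<integral>x. (\<integral>y. F x * G y \<partial>lborel) \<partial>lborel)"
      using lborel_pair.integral_fst[OF iP] by simp
    also have "\<dots> = (\<integral>x. F x * (\<integral>y. G y \<partial>lborel) \<partial>lborel)" by simp
    also have "\<dots> = integral\<^sup>L lborel F * integral\<^sup>L lborel G" by simp
    finally show ?thesis .
  qed
  have iP': "integrable lborel (\<lambda>(x, s). F x * G s)"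
    using iP by (simp add: lborel_prod)
  have "((\<lambda>(x, s). F x * G s) has_integral (integral\<^sup>L lborel F * integral\<^sup>L lborel G)) UNIV"
    using has_integral_integral_lborel[OF iP'] val by (simp add: lborel_prod)
  moreover have "(\<lambda>(x, s). F x * G s) = (\<lambda>z. if z \<in> A \<times> B then (case z of (x,s) \<Rightarrow> \<alpha> x * \<beta> s) else 0)"
    by (auto simp: F_def G_def indicator_def fun_eq_iff)
  ultimately have "((\<lambda>(x,s). \<alpha> x * \<beta> s) has_integral (integral\<^sup>L lborel F * integral\<^sup>L lborel G)) (A \<times> B)"
    by (simp add: has_integral_restrict_UNIV)
  moreover have "integral\<^sup>L lborel F = integral A \<alpha>"
    using set_borel_integral_eq_integral(2)[OF ia] unfolding set_lebesgue_integral_def F_def by simp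
  moreover have "integral\<^sup>L lborel G = integral {a..b} \<beta>"
    using set_borel_integral_eq_integral(2)[OF ib] unfolding set_lebesgue_integral_def G_def B_def
    by (simp add: integral_open_interval_real)
  ultimately show ?thesis unfolding B_def by simp
qed

lemma grad_sum:
  fixes v PP :: "nat \<Rightarrow> real^'d::finite \<Rightarrow> real" and GG :: "nat \<Rightarrow> real^'d \<Rightarrow> real^'d"
  assumes U: "open U" "x \<in> U" and vP: "\<And>j y. j \<le> q \<Longrightarrow> y \<in> U \<Longrightarrow> v j y = PP j y"
    and dP: "\<And>j. j \<le> q \<Longrightarrow> (PP j has_derivative (\<lambda>h. GG j x \<bullet> h)) (at x)"
    and f: "\<And>y. y \<in> U \<Longrightarrow> f y = (\<Sum>j\<le>q. v j y * w j)"
  shows "grad f x = (\<Sum>j\<le>q. w j *\<^sub>R GG j x)"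
proof (rule grad_local[OF U])
  show "f y = (\<Sum>j\<le>q. PP j y * w j)" if "y \<in> U" for y
    using f[OF that] vP[OF _ that] by simp
  have "((\<lambda>y. \<Sum>j\<le>q. PP j y * w j) has_derivative (\<lambda>h. \<Sum>j\<le>q. (GG j x \<bullet> h) * w j)) (at x)"
    by (intro has_derivative_sum has_derivative_mult_left dP) auto
  moreover have "(\<lambda>h. \<Sum>j\<le>q. (GG j x \<bullet> h) * w j) = (\<lambda>h. (\<Sum>j\<le>q. w j *\<^sub>R GG j x) \<bullet> h)"
    by (simp add: inner_sum_left mult.commute)
  ultimately show "((\<lambda>y. \<Sum>j\<le>q. PP j y * w j) has_derivative (\<lambda>h. (\<Sum>j\<le>q. w j *\<^sub>R GG j x) \<bullet> h)) (at x)"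
    by simp
qed

lemma Hpoly:
  fixes e :: "nat \<Rightarrow> real"
  assumes q: "1 \<le> q"
  shows "\<exists>H. degree H \<le> q \<and> coeff H q = - lam * real q * e q \<and>
     (\<forall>r. poly H r = (\<theta> - lam * (r - a)) * (\<Sum>j\<le>q. real j * r^(j-1) * e j))"
proof -
  define S where "S = (\<Sum>j\<le>q. monom (real j * e j) (j - 1))"
  define H where "H = [:\<theta> + lam * a, - lam:] * S"
  have dS: "degree S \<le> q - 1" unfolding S_def
    by (intro degree_sum_le) (auto simp: degree_monom_le intro: order.trans[OF degree_monom_le])
  have "degree H \<le> degree [:\<theta> + lam * a, - lam:] + degree S" unfolding H_def by (rule degree_mult_le)
  also have "\<dots> \<le> 1 + (q - 1)" using dS by (intro add_mono) auto
  finally have dH: "degree H \<le> q" using q by simp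
  have cS: "coeff S q = 0" using dS q by (intro coeff_eq_0) auto
  have cS1: "coeff S (q - 1) = real q * e q"
  proof -
    have "coeff S (q - 1) = (\<Sum>j\<le>q. if j - 1 = q - 1 then real j * e j else 0)"
      unfolding S_def by (simp add: coeff_sum coeff_monom)
    also have "\<dots> = (\<Sum>j\<in>{q}. if j - 1 = q - 1 then real j * e j else 0)"
      by (rule sum.mono_neutral_right) (use q in auto)
    finally show ?thesis by simp
  qed
  have cH: "coeff H q = - lam * real q * e q"
  proof -
    have "H = smult (\<theta> + lam * a) S + pCons 0 (smult (- lam) S)"
      unfolding H_def by (simp add: mult_pCons_left)
    then have "coeff H q = (\<theta> + lam * a) * coeff S q + (- lam) * coeff S (q - 1)"
      using q by (cases q) (auto simp: coeff_pCons)
    then show ?thesis using cS cS1 by simp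
  qed
  have pH: "poly H r = (\<theta> - lam * (r - a)) * (\<Sum>j\<le>q. real j * r^(j-1) * e j)" for r
    unfolding H_def S_def by (simp add: poly_sum poly_monom algebra_simps)
  show ?thesis using dH cH pH by blast
qed

lemma neg_times:
  fixes N :: "'a::euclidean_space set"
  assumes "negligible N" "closed N"
  shows "negligible (N \<times> (UNIV :: real set))"
proof -
  have Nb: "N \<in> sets lborel" using assms(2) by simp
  have "N \<in> null_sets lebesgue" using assms(1) negligible_iff_null_sets by blast
  then have N0: "N \<in> null_sets lborel" using null_sets_completion_iff[OF Nb] by simp
  have "N \<times> UNIV \<in> null_sets (lborel \<Otimes>\<^sub>M (lborel :: real measure))"
    by (rule lborel.times_in_null_sets1[OF N0]) simp
  then have P: "N \<times> (UNIV :: real set) \<in> null_sets lborel" by (simp add: lborel_prod)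
  then have "N \<times> (UNIV :: real set) \<in> null_sets lebesgue"
    using null_sets_completion_iff[of "N \<times> UNIV" lborel] null_setsD2[OF P] by auto
  then show ?thesis using negligible_iff_null_sets by blast
qed

lemma simplex_cc:
  fixes K :: "(real^'d) set"
  assumes S: "is_simplex S K"
  shows "compact K \<and> convex K"
proof -
  have S': "finite S \<and> card S = CARD('d) + 1 \<and> \<not> affine_dependent S \<and> K = convex hull S" using S unfolding is_simplex_def .
  have f: "finite S" using conjunct1[OF S'] .
  have k: "K = convex hull S" using conjunct2[OF conjunct2[OF conjunct2[OF S']]] .
  show ?thesis unfolding k using f by (simp add: compact_convex_hull finite_imp_compact)
qed

lemma fin_alg:
  fixes c I \<zeta> d e K0 :: real and q :: nat
  assumes "e * K0 = d / (2 * real q + 1)" "d > 0" "e > 0"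
  shows "- c\<^sup>2 * (I * ((- (\<zeta> / d) * real q / e) * K0)) = c\<^sup>2 * real q * \<zeta> / (2 * real q + 1) * ((1 / e)\<^sup>2 * I)"
proof -
  have "K0 = (e * K0) / e" using assms(3) by simp
  also have "\<dots> = d / ((2 * real q + 1) * e)" unfolding assms(1) by simp
  finally have K: "K0 = d / ((2 * real q + 1) * e)" .
  have p: "2 * real q + 1 > 0" by simp
  show ?thesis unfolding K using assms p by (simp add: field_simps power2_eq_square)
qed

lemma core:
  fixes \<Omega> :: "(real^'d) set" and Th :: "(real^'d) set set"
    and p q :: nat and a b c \<zeta> \<theta> lam :: real
    and u :: "real^'d \<Rightarrow> real \<Rightarrow> real" and \<sigma> :: "real^'d \<Rightarrow> real"
    and v :: "nat \<Rightarrow> real^'d \<Rightarrow> real" and F :: "real^'d \<Rightarrow> real \<Rightarrow> real^'d"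
  assumes oO: "open \<Omega>" and bO: "bounded \<Omega>" and mesh: "simplicial_mesh \<Omega> Th"
    and q: "1 \<le> q" and ab: "a < b"
    and v: "\<forall>j\<le>q. v j \<in> Vh \<Omega> Th p"
    and uv: "\<forall>x. \<forall>s\<in>{a..b}. u x s = (\<Sum>j\<le>q. v j x * s^j)"
    and sig: "\<forall>x\<in>\<Omega>. \<forall>s\<in>{a<..<b}. u x s = \<sigma> x * legendre_on a b q s + tproj a b (q - 1) (u x) s"
    and lam: "lam = \<zeta> / (b - a)"
    and F: "F = (\<lambda>x s. (\<theta> - lam * (s - a)) *\<^sub>R grad (\<lambda>y. deriv (u y) s) x)"
  shows "- c\<^sup>2 * integral (\<Omega> \<times> {a<..<b}) (\<lambda>(x, s). grad (\<lambda>y. u y s) x \<bullet> (F x s - tprojv a b (q - 1) (F x) s))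
     = c\<^sup>2 * real q * \<zeta> / (2 * real q + 1) * integral \<Omega> (\<lambda>x. (norm (grad \<sigma> x))\<^sup>2)"
proof -
  note mesh' = mesh[unfolded simplicial_mesh_def]
  have fin: "finite Th" using conjunct1[OF mesh'] .
  have cov: "\<Union>Th = closure \<Omega>" using conjunct1[OF conjunct2[OF conjunct2[OF mesh']]] .
  have simp_ex: "\<forall>K\<in>Th. \<exists>S. is_simplex S K" using conjunct1[OF conjunct2[OF mesh']] .
  have cK: "compact K \<and> convex K" if "K \<in> Th" for K
  proof -
    have "\<exists>S. is_simplex S K" by (rule bspec[OF simp_ex that])
    then obtain S where "is_simplex S K" by (rule exE)
    then show ?thesis by (rule simplex_cc)
  qed
  have ex1: "\<forall>j\<in>{..q}. \<exists>PPj. \<forall>K\<in>Th. mpoly_le p (PPj K) \<and> (\<forall>x\<in>K. v j x = PPj K x)"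
  proof
    fix j assume "j \<in> {..q}"
    then have "v j \<in> Vh \<Omega> Th p" using v by simp
    then have "\<forall>K\<in>Th. \<exists>P. mpoly_le p P \<and> (\<forall>x\<in>K. v j x = P x)" unfolding Vh_def by simp
    then show "\<exists>PPj. \<forall>K\<in>Th. mpoly_le p (PPj K) \<and> (\<forall>x\<in>K. v j x = PPj K x)" by (rule bchoice)
  qed
  obtain PP where PP: "\<forall>j\<in>{..q}. \<forall>K\<in>Th. mpoly_le p (PP j K) \<and> (\<forall>x\<in>K. v j x = PP j K x)"
    using bchoice[OF ex1] by (rule exE)
  have ex2: "\<forall>j\<in>{..q}. \<exists>GGj. \<forall>K\<in>Th. continuous_on UNIV (GGj K) \<and> (\<forall>x. (PP j K has_derivative (\<lambda>h. GGj K x \<bullet> h)) (at x))"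
  proof
    fix j assume j: "j \<in> {..q}"
    have "\<forall>K\<in>Th. \<exists>G. continuous_on UNIV G \<and> (\<forall>x. (PP j K has_derivative (\<lambda>h. G x \<bullet> h)) (at x))"
    proof
      fix K assume "K \<in> Th"
      then have "mpoly_le p (PP j K)" using PP j by simp
      then show "\<exists>G. continuous_on UNIV G \<and> (\<forall>x. (PP j K has_derivative (\<lambda>h. G x \<bullet> h)) (at x))"
        by (rule mpoly_deriv)
    qed
    then show "\<exists>GGj. \<forall>K\<in>Th. continuous_on UNIV (GGj K) \<and> (\<forall>x. (PP j K has_derivative (\<lambda>h. GGj K x \<bullet> h)) (at x))"
      by (rule bchoice)
  qed
  obtain GG where GG: "\<forall>j\<in>{..q}. \<forall>K\<in>Th. continuous_on UNIV (GG j K) \<and> (\<forall>x. (PP j K has_derivative (\<lambda>h. GG j K x \<bullet> h)) (at x))"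
    using bchoice[OF ex2] by (rule exE)
  define N0 where "N0 = \<Union>(frontier ` Th)"
  define \<Omega>' where "\<Omega>' = \<Omega> - N0"
  have negN0: "negligible N0" unfolding N0_def
    by (rule negligible_Union) (use fin cK in \<open>auto intro!: negligible_convex_frontier\<close>)
  have clN0: "closed N0" unfolding N0_def using fin by (intro closed_Union) auto
  have oO': "open \<Omega>'" unfolding \<Omega>'_def using oO clN0 by (rule open_Diff)
  have sub: "\<Omega>' \<subseteq> \<Omega>" unfolding \<Omega>'_def by auto
  have intK: "\<exists>K\<in>Th. x \<in> interior K" if "x \<in> \<Omega>'" for x
  proof -
    have "x \<in> closure \<Omega>" using that sub closure_subset by auto
    then obtain K where K: "K \<in> Th" "x \<in> K" using cov by auto
    have "x \<notin> frontier K" using that K unfolding \<Omega>'_def N0_def by auto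
    moreover have "closed K" using cK[OF K(1)] compact_imp_closed by auto
    ultimately show ?thesis using K by (auto simp: frontier_def closure_closed)
  qed
  define E where "E j x = grad (v j) x" for j x
  have EGG: "E j x = GG j K x" if "j \<le> q" "K \<in> Th" "x \<in> interior K" for j K x
    unfolding E_def
  proof (rule grad_local[of "interior K"])
    show "v j y = PP j K y" if "y \<in> interior K" for y
      using PP \<open>j \<le> q\<close> \<open>K \<in> Th\<close> interior_subset that by blast
    show "(PP j K has_derivative (\<lambda>h. GG j K x \<bullet> h)) (at x)" using GG that by auto
  qed (use that in auto)
  have gsum: "grad f x = (\<Sum>j\<le>q. w j *\<^sub>R E j x)"
    if x: "x \<in> \<Omega>'" and f: "\<forall>y\<in>\<Omega>. f y = (\<Sum>j\<le>q. v j y * w j)" for f w x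
  proof -
    obtain K where K: "K \<in> Th" "x \<in> interior K" using intK[OF x] by blast
    have "grad f x = (\<Sum>j\<le>q. w j *\<^sub>R GG j K x)"
    proof (rule grad_sum[where U="interior K \<inter> \<Omega>" and PP="\<lambda>j. PP j K"])
      show "open (interior K \<inter> \<Omega>)" using oO by auto
      show "x \<in> interior K \<inter> \<Omega>" using K x sub by auto
      show "v j y = PP j K y" if "j \<le> q" "y \<in> interior K \<inter> \<Omega>" for j y
        using PP that K interior_subset by blast
      show "(PP j K has_derivative (\<lambda>h. GG j K x \<bullet> h)) (at x)" if "j \<le> q" for j
        using GG that K by auto
      show "f y = (\<Sum>j\<le>q. v j y * w j)" if "y \<in> interior K \<inter> \<Omega>" for y using f that by auto
    qed
    also have "\<dots> = (\<Sum>j\<le>q. w j *\<^sub>R E j x)" using EGG K by (intro sum.cong) auto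
    finally show ?thesis .
  qed
  have ell0: "ell a b q > 0" using ell_pos[OF ab] .
  have Lnz: "\<exists>s0\<in>{a<..<b}. legendre_on a b q s0 \<noteq> 0"
  proof (rule ccontr)
    assume "\<not> ?thesis"
    then have "{a<..<b} \<subseteq> {x. poly (Lp a b q) x = 0}" by (auto simp: poly_Lp)
    moreover have "Lp a b q \<noteq> 0" using coeff_Lp[of a b q] ell0 by auto
    ultimately have "finite {a<..<b}" using poly_roots_finite finite_subset by blast
    then show False using infinite_Ioo[OF ab] by simp
  qed
  then obtain s0 where s0: "s0 \<in> {a<..<b}" "legendre_on a b q s0 \<noteq> 0" by blast
  have sig_eq: "\<sigma> y = v q y / ell a b q" if y: "y \<in> \<Omega>" for y
  proof -
    define P where "P = (\<Sum>j\<le>q. monom (v j y) j)"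
    have dP: "degree P \<le> q" unfolding P_def
      by (intro degree_sum_le) (auto intro: order.trans[OF degree_monom_le])
    have pP: "poly P s = (\<Sum>j\<le>q. v j y * s^j)" for s unfolding P_def by (simp add: poly_sum poly_monom)
    have cP: "coeff P q = v q y" unfolding P_def by (simp add: coeff_sum coeff_monom)
    have tp: "tproj a b (q - 1) (u y) = poly (P - smult (coeff P q / ell a b q) (Lp a b q))"
      by (rule tproj_char[OF ab q dP]) (use uv pP in auto)
    have "u y s0 = \<sigma> y * legendre_on a b q s0 + tproj a b (q - 1) (u y) s0" using sig y s0 by blast
    moreover have "u y s0 = poly P s0" using uv pP s0 by auto
    ultimately have "\<sigma> y * legendre_on a b q s0 = v q y / ell a b q * legendre_on a b q s0"
      unfolding tp cP by (simp add: poly_Lp algebra_simps)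
    then show ?thesis using mult_right_cancel[OF s0(2)] by blast
  qed
  have dU: "deriv (u y) s = (\<Sum>j\<le>q. v j y * (real j * s^(j-1)))" if s: "s \<in> {a<..<b}" for y s
  proof (rule DERIV_imp_deriv)
    have "((\<lambda>s. \<Sum>j\<le>q. v j y * s^j) has_field_derivative (\<Sum>j\<le>q. v j y * (real j * s^(j-1)))) (at s)"
      by (rule derivative_eq_intros refl | simp add: mult_ac)+
    then show "(u y has_field_derivative (\<Sum>j\<le>q. v j y * (real j * s^(j-1)))) (at s)"
      by (rule has_field_derivative_transform_within_open[where S="{a<..<b}"]) (use s uv in auto)
  qed
  have G1: "grad (\<lambda>y. u y s) x = (\<Sum>j\<le>q. s^j *\<^sub>R E j x)" if "x \<in> \<Omega>'" "s \<in> {a<..<b}" for x s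
    by (rule gsum[OF that(1)]) (use uv that(2) in \<open>auto simp: mult.commute\<close>)
  have G2: "grad (\<lambda>y. deriv (u y) s) x = (\<Sum>j\<le>q. (real j * s^(j-1)) *\<^sub>R E j x)" if "x \<in> \<Omega>'" "s \<in> {a<..<b}" for x s
    by (rule gsum[OF that(1)]) (use dU that(2) in auto)
  have G3: "grad \<sigma> x = (1 / ell a b q) *\<^sub>R E q x" if "x \<in> \<Omega>'" for x
  proof -
    have "grad \<sigma> x = (\<Sum>j\<le>q. (if j = q then 1 / ell a b q else 0) *\<^sub>R E j x)"
    proof (rule gsum[OF that])
      show "\<forall>y\<in>\<Omega>. \<sigma> y = (\<Sum>j\<le>q. v j y * (if j = q then 1 / ell a b q else 0))"
        using sig_eq by (simp add: if_distrib[of "\<lambda>c. v _ _ * c"] cong: if_cong)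
    qed
    then show ?thesis by (simp add: if_distrib[of "\<lambda>c. c *\<^sub>R _"] cong: if_cong)
  qed
  define \<kappa> where "\<kappa> = - lam * real q / ell a b q"
  have vecid: "F x s - tprojv a b (q - 1) (F x) s = (\<kappa> * legendre_on a b q s) *\<^sub>R E q x"
    if x: "x \<in> \<Omega>'" and s: "s \<in> {a<..<b}" for x s
  proof (subst vec_eq_iff, intro allI)
    fix i
    obtain H where H: "degree H \<le> q" "coeff H q = - lam * real q * (E q x $ i)"
      "\<forall>r. poly H r = (\<theta> - lam * (r - a)) * (\<Sum>j\<le>q. real j * r^(j-1) * (E j x $ i))"
      using Hpoly[OF q, of lam "\<lambda>j. E j x $ i" \<theta> a] by blast
    have FH: "F x r $ i = poly H r" if "r \<in> {a<..<b}" for r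
      using G2[OF x that] H(3) unfolding F by (simp add: sum_component mult_ac)
    have tp: "tproj a b (q - 1) (\<lambda>r. F x r $ i) = poly (H - smult (coeff H q / ell a b q) (Lp a b q))"
      by (rule tproj_char[OF ab q H(1)]) (rule FH)
    show "(F x s - tprojv a b (q - 1) (F x) s) $ i = ((\<kappa> * legendre_on a b q s) *\<^sub>R E q x) $ i"
      using FH[OF s] tp H(2) unfolding tprojv_def \<kappa>_def by (simp add: poly_Lp algebra_simps)
  qed
  have pt: "grad (\<lambda>y. u y s) x \<bullet> (F x s - tprojv a b (q - 1) (F x) s)
     = (\<Sum>j\<le>q. (E j x \<bullet> E q x) * (\<kappa> * (legendre_on a b q s * s^j)))"
    if "x \<in> \<Omega>'" "s \<in> {a<..<b}" for x s
    unfolding vecid[OF that] G1[OF that] by (simp add: inner_sum_left sum_distrib_left mult_ac)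
  define \<alpha> where "\<alpha> j x = E j x \<bullet> E q x" for j x
  define \<beta> where "\<beta> j s = \<kappa> * (legendre_on a b q s * s^j)" for j s
  have contE: "continuous_on \<Omega>' (E j)" if j: "j \<le> q" for j
  proof -
    have "isCont (E j) x" if x: "x \<in> \<Omega>'" for x
    proof -
      obtain K where K: "K \<in> Th" "x \<in> interior K" using intK[OF x] by blast
      have "continuous_on (interior K) (GG j K)"
        using GG j K(1) continuous_on_subset by blast
      then have "continuous_on (interior K) (E j)"
        by (rule continuous_on_eq) (use EGG j K(1) in auto)
      then show ?thesis using K(2) continuous_on_eq_continuous_at[OF open_interior] by blast
    qed
    then show ?thesis using continuous_on_eq_continuous_at[OF oO'] by blast
  qed
  have bndE: "\<exists>B. \<forall>x\<in>\<Omega>'. norm (E j x) \<le> B" if j: "j \<le> q" for j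
  proof -
    have "bounded (\<Union>K\<in>Th. GG j K ` K)"
    proof (rule bounded_UN[OF fin], rule ballI)
      fix K assume K: "K \<in> Th"
      have "continuous_on K (GG j K)" using GG j K continuous_on_subset by blast
      then show "bounded (GG j K ` K)"
        using cK[OF K] by (intro compact_imp_bounded compact_continuous_image) auto
    qed
    then obtain B where B: "\<forall>y\<in>(\<Union>K\<in>Th. GG j K ` K). norm y \<le> B" unfolding bounded_iff by blast
    have "norm (E j x) \<le> B" if x: "x \<in> \<Omega>'" for x
    proof -
      obtain K where K: "K \<in> Th" "x \<in> interior K" using intK[OF x] by blast
      have "E j x = GG j K x" using EGG j K by blast
      moreover have "x \<in> K" using K interior_subset by blast
      moreover have "norm (GG j K x) \<le> B" using B K(1) \<open>x \<in> K\<close> by blast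
      ultimately show ?thesis by simp
    qed
    then show ?thesis by blast
  qed
  have bO': "bounded \<Omega>'" using bO sub bounded_subset by blast
  have iA: "set_integrable lborel \<Omega>' (\<alpha> j)" if j: "j \<le> q" for j
  proof -
    obtain B1 where B1: "\<forall>x\<in>\<Omega>'. norm (E j x) \<le> B1" using bndE[OF j] by blast
    obtain B2 where B2: "\<forall>x\<in>\<Omega>'. norm (E q x) \<le> B2" using bndE[of q] by auto
    define f where "f x = indicator \<Omega>' x *\<^sub>R \<alpha> j x" for x
    have ca: "continuous_on \<Omega>' (\<alpha> j)" unfolding \<alpha>_def
      using contE[OF j] contE[of q] by (intro continuous_intros) auto
    have mf: "f \<in> borel_measurable borel" unfolding f_def
      by (rule borel_measurable_continuous_on_indicator[OF borel_open[OF oO'] ca])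
    have "integrable lborel (\<lambda>x. indicator \<Omega>' x *\<^sub>R f x)"
    proof (rule integrableI_bounded_set_indicator[where B="B1 * B2"])
      show "\<Omega>' \<in> sets lborel" using oO' by simp
      show "f \<in> borel_measurable lborel" using mf by simp
      show "emeasure lborel \<Omega>' < \<infinity>" using bO' by (rule emeasure_bounded_finite)
      show "AE x\<in>\<Omega>' in lborel. norm (f x) \<le> B1 * B2"
      proof (rule AE_I2, rule impI)
        fix x assume x: "x \<in> \<Omega>'"
        have "norm (f x) = \<bar>E j x \<bullet> E q x\<bar>" using x unfolding f_def \<alpha>_def by simp
        also have "\<dots> \<le> norm (E j x) * norm (E q x)" by (rule Cauchy_Schwarz_ineq2)
        also have "\<dots> \<le> B1 * B2"
        proof (rule mult_mono)
          show "norm (E j x) \<le> B1" "norm (E q x) \<le> B2" using B1 B2 x by auto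
          have "norm (E j x) \<le> B1" using B1 x by blast
          then show "0 \<le> B1" using norm_ge_zero[of "E j x"] by linarith
        qed simp
        finally show "norm (f x) \<le> B1 * B2" .
      qed
    qed
    moreover have "(\<lambda>x. indicator \<Omega>' x *\<^sub>R f x) = (\<lambda>x. indicator \<Omega>' x *\<^sub>R \<alpha> j x)"
      unfolding f_def by (auto simp: indicator_def)
    ultimately show ?thesis unfolding set_integrable_def by simp
  qed
  have hB: "((\<beta> j) has_integral (\<kappa> * (if j = q then K0 a b q else 0))) {a..b}" if j: "j \<le> q" for j
  proof -
    have d: "degree (monom (1::real) j) \<le> q" using j by (simp add: degree_monom_eq)
    have "((\<lambda>s. \<kappa> * (legendre_on a b q s * poly (monom 1 j) s)) has_integral (\<kappa> * (coeff (monom 1 j) q * K0 a b q))) {a..b}"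
      by (rule has_integral_mult_right[OF legendre_poly_int[OF ab d]])
    then show ?thesis unfolding \<beta>_def by (cases "j = q") (simp_all add: poly_monom coeff_monom)
  qed
  have cB: "continuous_on {a..b} (\<beta> j)" for j
    unfolding \<beta>_def legendre_on_def using ab by (intro continuous_intros) auto
  have hP: "((\<lambda>z. \<alpha> j (fst z) * \<beta> j (snd z)) has_integral (integral \<Omega>' (\<alpha> j) * integral {a..b} (\<beta> j))) (\<Omega>' \<times> {a<..<b})"
    if j: "j \<le> q" for j
    using prod_has_integral[OF _ iA[OF j] _ cB[of j]] oO' ab by (simp add: case_prod_unfold)
  have hS: "((\<lambda>z. \<Sum>j\<le>q. \<alpha> j (fst z) * \<beta> j (snd z)) has_integral (\<Sum>j\<le>q. integral \<Omega>' (\<alpha> j) * integral {a..b} (\<beta> j))) (\<Omega>' \<times> {a<..<b})"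
    by (rule has_integral_sum) (use hP in auto)
  have vS: "(\<Sum>j\<le>q. integral \<Omega>' (\<alpha> j) * integral {a..b} (\<beta> j)) = integral \<Omega>' (\<alpha> q) * (\<kappa> * K0 a b q)"
  proof -
    have "(\<Sum>j\<le>q. integral \<Omega>' (\<alpha> j) * integral {a..b} (\<beta> j)) = (\<Sum>j\<le>q. integral \<Omega>' (\<alpha> j) * (\<kappa> * (if j = q then K0 a b q else 0)))"
      using hB by (intro sum.cong refl) (simp add: integral_unique)
    also have "\<dots> = integral \<Omega>' (\<alpha> q) * (\<kappa> * K0 a b q)"
      by (simp add: if_distrib[of "\<lambda>c. _ * (_ * c)"] cong: if_cong)
    finally show ?thesis .
  qed
  have negNU: "negligible (N0 \<times> (UNIV :: real set))" by (rule neg_times[OF negN0 clN0])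
  define f where "f = (\<lambda>(x, s). grad (\<lambda>y. u y s) x \<bullet> (F x s - tprojv a b (q - 1) (F x) s))"
  have L1: "integral (\<Omega> \<times> {a<..<b}) f = integral (\<Omega>' \<times> {a<..<b}) f"
  proof (rule integral_spike_set)
    show "negligible {z \<in> \<Omega> \<times> {a<..<b} - \<Omega>' \<times> {a<..<b}. f z \<noteq> 0}"
      by (rule negligible_subset[OF negNU]) (auto simp: \<Omega>'_def)
    have e: "{z \<in> \<Omega>' \<times> {a<..<b} - \<Omega> \<times> {a<..<b}. f z \<noteq> 0} = {}" using sub by auto
    show "negligible {z \<in> \<Omega>' \<times> {a<..<b} - \<Omega> \<times> {a<..<b}. f z \<noteq> 0}" unfolding e by (rule negligible_empty)
  qed
  have L2: "integral (\<Omega>' \<times> {a<..<b}) f = integral (\<Omega>' \<times> {a<..<b}) (\<lambda>z. \<Sum>j\<le>q. \<alpha> j (fst z) * \<beta> j (snd z))"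
  proof (rule integral_cong)
    fix z assume z: "z \<in> \<Omega>' \<times> {a<..<b}"
    then obtain x s where xs: "z = (x, s)" "x \<in> \<Omega>'" "s \<in> {a<..<b}" by blast
    show "f z = (\<Sum>j\<le>q. \<alpha> j (fst z) * \<beta> j (snd z))"
      using pt[OF xs(2,3)] unfolding xs(1) f_def \<alpha>_def \<beta>_def by simp
  qed
  have lhsV: "integral (\<Omega> \<times> {a<..<b}) f = integral \<Omega>' (\<alpha> q) * (\<kappa> * K0 a b q)"
    using L1 L2 integral_unique[OF hS] vS by simp
  have R1: "integral \<Omega> (\<lambda>x. (norm (grad \<sigma> x))\<^sup>2) = integral \<Omega>' (\<lambda>x. (norm (grad \<sigma> x))\<^sup>2)"
  proof (rule integral_spike_set)
    show "negligible {x \<in> \<Omega> - \<Omega>'. (norm (grad \<sigma> x))\<^sup>2 \<noteq> 0}"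
      by (rule negligible_subset[OF negN0]) (auto simp: \<Omega>'_def)
    have e: "{x \<in> \<Omega>' - \<Omega>. (norm (grad \<sigma> x))\<^sup>2 \<noteq> 0} = {}" using sub by auto
    show "negligible {x \<in> \<Omega>' - \<Omega>. (norm (grad \<sigma> x))\<^sup>2 \<noteq> 0}" unfolding e by (rule negligible_empty)
  qed
  have R2: "integral \<Omega>' (\<lambda>x. (norm (grad \<sigma> x))\<^sup>2) = integral \<Omega>' (\<lambda>x. (1 / ell a b q)\<^sup>2 * \<alpha> q x)"
  proof (rule integral_cong)
    fix x assume x: "x \<in> \<Omega>'"
    have "(norm (grad \<sigma> x))\<^sup>2 = grad \<sigma> x \<bullet> grad \<sigma> x" by (rule power2_norm_eq_inner)
    also have "\<dots> = (1 / ell a b q)\<^sup>2 * \<alpha> q x" unfolding G3[OF x] \<alpha>_def by (simp add: power2_eq_square)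
    finally show "(norm (grad \<sigma> x))\<^sup>2 = (1 / ell a b q)\<^sup>2 * \<alpha> q x" .
  qed
  have rhsV: "integral \<Omega> (\<lambda>x. (norm (grad \<sigma> x))\<^sup>2) = (1 / ell a b q)\<^sup>2 * integral \<Omega>' (\<alpha> q)"
    using R1 R2 by simp
  have "- c\<^sup>2 * (integral \<Omega>' (\<alpha> q) * ((- (\<zeta> / (b - a)) * real q / ell a b q) * K0 a b q))
     = c\<^sup>2 * real q * \<zeta> / (2 * real q + 1) * ((1 / ell a b q)\<^sup>2 * integral \<Omega>' (\<alpha> q))"
    by (rule fin_alg[OF ell_K0[OF ab]]) (use ab ell0 in auto)
  then show ?thesis
    unfolding f_def[symmetric] lhsV rhsV \<kappa>_def lam by simp
qed

theorem mainTheorem6: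
  fixes \<Omega> :: "(real^'d) set" and Th :: "(real^'d) set set"
    and p q N n :: nat and tt :: "nat \<Rightarrow> real" and T c \<theta> :: real
    and u :: "real^'d \<Rightarrow> real \<Rightarrow> real" and \<sigma> :: "real^'d \<Rightarrow> real"
  assumes "open \<Omega>" "bounded \<Omega>" "connected \<Omega>" "\<Omega> \<noteq> {}" "interior (closure \<Omega>) = \<Omega>"
    and "simplicial_mesh \<Omega> Th"
    and "time_partition tt N T"
    and "q \<ge> 1" and "c > 0" and "n \<in> {1..N}"
    and "u \<in> Vht \<Omega> Th p tt N q"
    and "\<forall>x\<in>\<Omega>. \<forall>s\<in>{tt (n - 1)<..<tt n}.
           u x s = \<sigma> x * legendre_on (tt (n - 1)) (tt n) q s + tproj (tt (n - 1)) (tt n) (q - 1) (u x) s"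
  shows "let a = tt (n - 1); b = tt n;
             \<zeta> = 1 / (4 * (2 * real q + 1));
             lam = \<zeta> / (b - a);
             \<phi> = (\<lambda>s. \<theta> - lam * (s - a));
             F = (\<lambda>x s. \<phi> s *\<^sub>R grad (\<lambda>y. deriv (u y) s) x);
             lhs = - c\<^sup>2 * integral (\<Omega> \<times> {a<..<b})
                     (\<lambda>(x, s). grad (\<lambda>y. u y s) x \<bullet> (F x s - tprojv a b (q - 1) (F x) s));
             rhs = c\<^sup>2 * real q * \<zeta> / (2 * real q + 1) * integral \<Omega> (\<lambda>x. (norm (grad \<sigma> x))\<^sup>2)
         in lhs = rhs \<and> rhs \<ge> 0"
proof -
  have n: "n \<in> {1..N}" by fact
  have tp: "\<forall>n\<in>{1..N}. tt (n - 1) < tt n" using assms(7) unfolding time_partition_def by blast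
  have ab: "tt (n - 1) < tt n" by (rule bspec[OF tp n])
  have "\<forall>n\<in>{1..N}. \<exists>v. (\<forall>j\<le>q. v j \<in> Vh \<Omega> Th p) \<and>
      (\<forall>x. \<forall>s\<in>{tt (n - 1)..tt n}. u x s = (\<Sum>j\<le>q. v j x * s ^ j))"
    using assms(11) unfolding Vht_def by simp
  then have "\<exists>v. (\<forall>j\<le>q. v j \<in> Vh \<Omega> Th p) \<and>
      (\<forall>x. \<forall>s\<in>{tt (n - 1)..tt n}. u x s = (\<Sum>j\<le>q. v j x * s ^ j))"
    using n by (rule bspec)
  then obtain v where v: "\<forall>j\<le>q. v j \<in> Vh \<Omega> Th p"
    and uv: "\<forall>x. \<forall>s\<in>{tt (n - 1)..tt n}. u x s = (\<Sum>j\<le>q. v j x * s ^ j)"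
    by blast
  define \<zeta> where "\<zeta> = 1 / (4 * (2 * real q + 1))"
  have C: "- c\<^sup>2 * integral (\<Omega> \<times> {tt (n - 1)<..<tt n})
      (\<lambda>(x, s). grad (\<lambda>y. u y s) x \<bullet>
        ((\<lambda>x s. (\<theta> - \<zeta> / (tt n - tt (n - 1)) * (s - tt (n - 1))) *\<^sub>R grad (\<lambda>y. deriv (u y) s) x) x s
         - tprojv (tt (n - 1)) (tt n) (q - 1) ((\<lambda>x s. (\<theta> - \<zeta> / (tt n - tt (n - 1)) * (s - tt (n - 1))) *\<^sub>R grad (\<lambda>y. deriv (u y) s) x) x) s))
     = c\<^sup>2 * real q * \<zeta> / (2 * real q + 1) * integral \<Omega> (\<lambda>x. (norm (grad \<sigma> x))\<^sup>2)"
    by (rule core[OF assms(1) assms(2) assms(6) assms(8) ab v uv assms(12) refl refl])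
  have I0: "integral \<Omega> (\<lambda>x. (norm (grad \<sigma> x))\<^sup>2) \<ge> 0"
  proof (cases "(\<lambda>x. (norm (grad \<sigma> x))\<^sup>2) integrable_on \<Omega>")
    case True
    then show ?thesis by (rule integral_nonneg) simp
  next
    case False
    then show ?thesis by (simp add: not_integrable_integral)
  qed
  have z0: "\<zeta> \<ge> 0" unfolding \<zeta>_def by simp
  have R0: "c\<^sup>2 * real q * \<zeta> / (2 * real q + 1) * integral \<Omega> (\<lambda>x. (norm (grad \<sigma> x))\<^sup>2) \<ge> 0"
    using I0 z0 by (intro mult_nonneg_nonneg divide_nonneg_nonneg) auto
  show ?thesis
    unfolding Let_def using C R0 unfolding \<zeta>_def by simp
qed

end
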